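(* Let $k\ge 2$ be an integer. Every $k$-automatic sequence is strongly $k$-recursive.
   Context: A sequence $(f(n))_{n\ge0}$ is $k$-automatic if there is a deterministic finite automaton with output which, on input the base-$k$ representation of $n$, reaches a state whose output is $f(n)$. A sequence $(f(n))_{n\ge 0}$ is strongly $k$-recursive if there exist natural numbers $r<t$ such that for every $b$ with $0\le b<k^t$, the sequence $(f(k^t n+b))_{n\ge 0}$ is a (finite) linear combination, with constant coefficients, of the sequences $(f(k^r n+a))_{n\ge0}$ with $0\le a<k^r$. *)

theory Defs
  imports Main
begin

text \<open>Base-k digits of n, least significant digit first, no leading zeros
  (the representation of 0 is the empty word).\<close>
function digits_lsd :: "nat \<Rightarrow> nat \<Rightarrow> nat list" where
  "digits_lsd k n = (if k < 2 \<or> n = 0 then [] else n mod k # digits_lsd k (n div k))"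
  by auto
termination by (relation "measure snd") auto

definition base_rep :: "nat \<Rightarrow> nat \<Rightarrow> nat list" where
  "base_rep k n = rev (digits_lsd k n)"

definition k_automatic :: "nat \<Rightarrow> (nat \<Rightarrow> 'a) \<Rightarrow> bool" where
  "k_automatic k f \<longleftrightarrow>
     (\<exists>(Q :: nat set) q0 (delta :: nat \<Rightarrow> nat \<Rightarrow> nat) (out :: nat \<Rightarrow> 'a).
        finite Q \<and> q0 \<in> Q \<and> (\<forall>q\<in>Q. \<forall>d<k. delta q d \<in> Q) \<and>
        (\<forall>n. out (fold (\<lambda>d q. delta q d) (base_rep k n) q0) = f n))"

definition strongly_k_recursive :: "nat \<Rightarrow> (nat \<Rightarrow> 'a::comm_ring_1) \<Rightarrow> bool" where
  "strongly_k_recursive k f \<longleftrightarrow>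
     (\<exists>r t :: nat. r < t \<and>
        (\<forall>b < k ^ t. \<exists>c :: nat \<Rightarrow> 'a.
           \<forall>n. f (k ^ t * n + b) = (\<Sum>a < k ^ r. c a * f (k ^ r * n + a))))"

end

theory Submission
  imports Defs "HOL-Library.FuncSet"
begin

declare digits_lsd.simps[simp del]

fun pad :: "nat \<Rightarrow> nat \<Rightarrow> nat \<Rightarrow> nat list" where
  "pad k 0 a = []"
| "pad k (Suc e) a = a mod k # pad k e (a div k)"

lemma digits_lsd_shift:
  assumes "k \<ge> 2" "n \<ge> 1" "a < k ^ e"
  shows "digits_lsd k (k ^ e * n + a) = pad k e a @ digits_lsd k n"
  using assms(3)
proof (induction e arbitrary: a)
  case 0
  then show ?case by simp
next
  case (Suc e)
  have pos: "k ^ Suc e * n + a \<noteq> 0" using assms by simp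
  have m1: "(k ^ Suc e * n + a) mod k = a mod k" by (simp add: mult.assoc)
  have d1: "(k ^ Suc e * n + a) div k = k ^ e * n + a div k"
    using assms by (simp add: mult.assoc)
  have "a div k < k ^ e" using Suc.prems assms
    by (simp add: div_less_iff_less_mult mult.commute)
  then have "digits_lsd k (k ^ e * n + a div k) = pad k e (a div k) @ digits_lsd k n"
    using Suc.IH by blast
  then show ?case using pos assms
    by (subst digits_lsd.simps) (simp only: m1 d1, simp)
qed

lemma digits_lsd_lt: "d \<in> set (digits_lsd k n) \<Longrightarrow> d < k"
proof (induction k n rule: digits_lsd.induct)
  case (1 k n)
  then show ?case
    by (subst (asm) digits_lsd.simps) (auto split: if_splits)
qed

lemma pad_lt: "k > 0 \<Longrightarrow> d \<in> set (pad k e a) \<Longrightarrow> d < k"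
  by (induction e arbitrary: a) auto

lemma fold_in:
  assumes "\<forall>q\<in>Q. \<forall>d<k. delta q d \<in> Q" "\<forall>d\<in>set xs. d < k" "q \<in> Q"
  shows "fold (\<lambda>d q. delta q d) xs q \<in> Q"
  using assms by (induction xs arbitrary: q) auto

theorem theorem2:
  fixes k :: nat and f :: "nat \<Rightarrow> 'a::comm_ring_1"
  assumes "k \<ge> 2" and "k_automatic k f"
  shows "strongly_k_recursive k f"
proof -
  obtain Q q0 delta and out :: "nat \<Rightarrow> 'a" where
    fQ: "finite Q" and q0: "q0 \<in> Q" and cl: "\<forall>q\<in>Q. \<forall>d<k. delta q d \<in> Q" and
    fo: "\<forall>n. out (fold (\<lambda>d q. delta q d) (base_rep k n) q0) = f n"
    using assms(2) unfolding k_automatic_def by blast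
  define st where "st n = fold (\<lambda>d q. delta q d) (base_rep k n) q0" for n
  have stQ: "st n \<in> Q" for n
    unfolding st_def base_rep_def
    by (rule fold_in[OF cl _ q0]) (auto dest: digits_lsd_lt)
  define V where "V = out ` Q"
  define \<Phi> where "\<Phi> = (\<lambda>(g :: nat \<Rightarrow> 'a, v :: 'a). \<lambda>n. if n = 0 then v else g (st n))"
  define K where "K = \<Phi> ` (PiE Q (\<lambda>_. V) \<times> V)"
  have fK: "finite K" unfolding K_def V_def using fQ
    by (intro finite_imageI finite_cartesian_product finite_PiE) auto
  define S where "S e = (\<lambda>a. \<lambda>n. f (k ^ e * n + a)) ` {..<k ^ e}" for e
  have SK: "S e \<subseteq> K" for e
  proof
    fix s assume "s \<in> S e"
    then obtain a where a: "a < k ^ e" and s: "s = (\<lambda>n. f (k ^ e * n + a))"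
      unfolding S_def by auto
    define g where "g = restrict (\<lambda>q. out (fold (\<lambda>d q. delta q d) (rev (pad k e a)) q)) Q"
    have "g \<in> PiE Q (\<lambda>_. V)" unfolding g_def V_def
      using fold_in[OF cl _] pad_lt[of k] assms(1) by auto
    moreover have "f a \<in> V" unfolding V_def using fo stQ st_def by (metis image_eqI)
    moreover have "s = \<Phi> (g, f a)"
    proof
      fix n show "s n = \<Phi> (g, f a) n"
      proof (cases "n = 0")
        case True then show ?thesis by (simp add: s \<Phi>_def)
      next
        case False
        have "s n = out (fold (\<lambda>d q. delta q d) (base_rep k (k ^ e * n + a)) q0)"
          using fo s by simp
        also have "base_rep k (k ^ e * n + a) = base_rep k n @ rev (pad k e a)"
          unfolding base_rep_def using digits_lsd_shift[OF assms(1) _ a, of n] False by simp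
        finally show ?thesis using False stQ[of n]
          by (simp add: \<Phi>_def g_def st_def)
      qed
    qed
    ultimately show "s \<in> K" unfolding K_def by blast
  qed
  have "finite (range S)"
    by (rule finite_subset[of _ "Pow K"]) (use SK fK in auto)
  then have "\<not> inj S" using finite_imageD[of S UNIV] by auto
  then obtain x y where "x \<noteq> y" "S x = S y" unfolding inj_def by blast
  then obtain r t where rt: "r < t" "S r = S t"
    by (metis linorder_neqE_nat)
  show ?thesis unfolding strongly_k_recursive_def
  proof (rule exI[of _ r], rule exI[of _ t], rule conjI)
    show "r < t" by fact
    show "\<forall>b<k ^ t. \<exists>c. \<forall>n. f (k ^ t * n + b) = (\<Sum>a<k ^ r. c a * f (k ^ r * n + a))"
    proof (rule allI, rule impI)
    fix b assume b: "b < k ^ t"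
    then have "(\<lambda>n. f (k ^ t * n + b)) \<in> S r" using rt unfolding S_def by auto
    then obtain a where a: "a < k ^ r" and eq: "(\<lambda>n. f (k ^ t * n + b)) = (\<lambda>n. f (k ^ r * n + a))"
      unfolding S_def by auto
    show "\<exists>c. \<forall>n. f (k ^ t * n + b) = (\<Sum>a'<k ^ r. c a' * f (k ^ r * n + a'))"
    proof (intro exI[of _ "\<lambda>a'. if a' = a then 1 else 0"] allI)
      fix n
      have "(\<Sum>a'<k ^ r. (if a' = a then 1 else 0) * f (k ^ r * n + a')) = f (k ^ r * n + a)"
        using a by (simp add: if_distrib[of "\<lambda>x. x * _"] sum.delta cong: if_cong)
      then show "f (k ^ t * n + b) = (\<Sum>a'<k ^ r. (if a' = a then 1 else 0) * f (k ^ r * n + a'))"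
        using fun_cong[OF eq, of n] by simp
    qed
    qed
  qed
qed

end
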